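(* Suppose that for every $c\in\{1,\dots,K-1\}$ the density $\bar p_c$ satisfies $$\bar p_c(\bm x,\bar Y)=\binom{K-1}{c}^{-1}\sum_{y\notin \bar Y}p(\bm x,y)\qquad(\bm x\in\mathcal X,\ \bar Y\in\overline{\mathcal Y}_c).$$ Let $\bm\alpha=(\alpha_1,\dots,\alpha_{K-1})$ satisfy $\alpha_c\ge 0$ and $\sum_{c=1}^{K-1}\alpha_c=1$. Define the multi-complementary risk $$R_{\mathrm{MCL}}(\bm g)=\sum_{c=1}^{K-1}\alpha_c R_c(\bm g),\qquad R_c(\bm g)=\mathbb E_{\bar p_c(\bm x,\bar Y)}\Big[\mathcal L(\bm g(\bm x))-\frac{K-1}{c}\sum_{y\in\bar Y}\ell(\bm g(\bm x),y)\Big].$$ Then for any loss $\ell$ and any decision function $\bm g$ (with finite expectations), $R_{\mathrm{MCL}}(\bm g)=R(\bm g)$.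
   Context: Let $K\ge 2$, $\mathcal X\subseteq\mathbb R^d$ the feature space and $\mathcal Y=\{1,\dots,K\}$ the label space. Let $p(\bm x,y)$ be a joint density on $\mathcal X\times\mathcal Y$ with marginal density $p(\bm x)$. For $c\in\{1,\dots,K-1\}$, $\overline{\mathcal Y}_c$ denotes the collection of all $c$-element subsets of $\{1,\dots,K\}$, and $\bar p_c(\bm x,\bar Y)$ is a density on $\mathcal X\times\overline{\mathcal Y}_c$. A decision function is a map $\bm g:\mathcal X\to\mathbb R^K$, a loss is a function $\ell:\mathbb R^K\times\mathcal Y\to[0,\infty)$, the classification risk is $R(\bm g)=\mathbb E_{p(\bm x,y)}[\ell(\bm g(\bm x),y)]$, and the cumulative loss is $\mathcal L(\bm g(\bm x))=\sum_{y=1}^K\ell(\bm g(\bm x),y)$. *)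

theory Defs
  imports "HOL-Analysis.Analysis"
begin

text \<open>Labels are 1..K (as naturals); decision values in R^K are represented as nat => real.\<close>

definition labels :: "nat \<Rightarrow> nat set" where
  "labels K = {1..K}"

definition compl_sets :: "nat \<Rightarrow> nat \<Rightarrow> nat set set" where
  "compl_sets K c = {Y. Y \<subseteq> labels K \<and> card Y = c}"

definition cum_loss :: "nat \<Rightarrow> ((nat \<Rightarrow> real) \<Rightarrow> nat \<Rightarrow> real) \<Rightarrow> (nat \<Rightarrow> real) \<Rightarrow> real" where
  "cum_loss K loss v = (\<Sum>y\<in>labels K. loss v y)"

definition class_risk :: "nat \<Rightarrow> 'a::euclidean_space set \<Rightarrow> ('a \<Rightarrow> nat \<Rightarrow> real)
    \<Rightarrow> ((nat \<Rightarrow> real) \<Rightarrow> nat \<Rightarrow> real) \<Rightarrow> ('a \<Rightarrow> (nat \<Rightarrow> real)) \<Rightarrow> real" where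
  "class_risk K X p loss g = (LINT x:X|lborel. (\<Sum>y\<in>labels K. loss (g x) y * p x y))"

definition Rc_integrand :: "nat \<Rightarrow> nat \<Rightarrow> ('a \<Rightarrow> nat set \<Rightarrow> real)
    \<Rightarrow> ((nat \<Rightarrow> real) \<Rightarrow> nat \<Rightarrow> real) \<Rightarrow> ('a \<Rightarrow> (nat \<Rightarrow> real)) \<Rightarrow> 'a \<Rightarrow> real" where
  "Rc_integrand K c pc loss g x =
     (\<Sum>Y\<in>compl_sets K c.
        (cum_loss K loss (g x) - (real (K - 1) / real c) * (\<Sum>y\<in>Y. loss (g x) y)) * pc x Y)"

definition comp_risk_c :: "nat \<Rightarrow> nat \<Rightarrow> 'a::euclidean_space set \<Rightarrow> ('a \<Rightarrow> nat set \<Rightarrow> real)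
    \<Rightarrow> ((nat \<Rightarrow> real) \<Rightarrow> nat \<Rightarrow> real) \<Rightarrow> ('a \<Rightarrow> (nat \<Rightarrow> real)) \<Rightarrow> real" where
  "comp_risk_c K c X pc loss g = (LINT x:X|lborel. Rc_integrand K c pc loss g x)"

definition mcl_risk :: "nat \<Rightarrow> 'a::euclidean_space set \<Rightarrow> (nat \<Rightarrow> real)
    \<Rightarrow> (nat \<Rightarrow> 'a \<Rightarrow> nat set \<Rightarrow> real)
    \<Rightarrow> ((nat \<Rightarrow> real) \<Rightarrow> nat \<Rightarrow> real) \<Rightarrow> ('a \<Rightarrow> (nat \<Rightarrow> real)) \<Rightarrow> real" where
  "mcl_risk K X \<alpha> pbar loss g = (\<Sum>c\<in>{1..K-1}. \<alpha> c * comp_risk_c K c X (pbar c) loss g)"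

end

theory Submission
  imports Defs
begin

lemma card_with_elem:
  assumes "finite T" "y \<in> T" "c \<ge> 1"
  shows "card {Y. Y \<subseteq> T \<and> card Y = c \<and> y \<in> Y} = (card T - 1) choose (c - 1)"
proof -
  have "bij_betw (\<lambda>Y. Y - {y}) {Y. Y \<subseteq> T \<and> card Y = c \<and> y \<in> Y} {B. B \<subseteq> T - {y} \<and> card B = c - 1}"
  proof (rule bij_betw_byWitness[where f'="insert y" and f="\<lambda>Y. Y - {y}"])
    show "\<forall>a\<in>{Y. Y \<subseteq> T \<and> card Y = c \<and> y \<in> Y}. insert y (a - {y}) = a" by auto
    show "\<forall>a'\<in>{B. B \<subseteq> T - {y} \<and> card B = c - 1}. insert y a' - {y} = a'" by auto
    show "(\<lambda>Y. Y - {y}) ` {Y. Y \<subseteq> T \<and> card Y = c \<and> y \<in> Y} \<subseteq> {B. B \<subseteq> T - {y} \<and> card B = c - 1}"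
      using assms by (auto simp: card_Diff_singleton intro: finite_subset)
    show "insert y ` {B. B \<subseteq> T - {y} \<and> card B = c - 1} \<subseteq> {Y. Y \<subseteq> T \<and> card Y = c \<and> y \<in> Y}"
    proof
      fix Z assume "Z \<in> insert y ` {B. B \<subseteq> T - {y} \<and> card B = c - 1}"
      then obtain B where B: "B \<subseteq> T - {y}" "card B = c - 1" "Z = insert y B" by auto
      have "finite B" using B(1) assms(1) by (meson finite_Diff finite_subset)
      have "y \<notin> B" using B(1) by auto
      then have "card Z = c" using B assms(3) \<open>finite B\<close> by simp
      then show "Z \<in> {Y. Y \<subseteq> T \<and> card Y = c \<and> y \<in> Y}" using B assms by auto
    qed
  qed
  then have "card {Y. Y \<subseteq> T \<and> card Y = c \<and> y \<in> Y} = card {B. B \<subseteq> T - {y} \<and> card B = c - 1}"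
    by (rule bij_betw_same_card)
  also have "\<dots> = card (T - {y}) choose (c - 1)" using assms by (simp add: n_subsets)
  also have "\<dots> = (card T - 1) choose (c - 1)" using assms by simp
  finally show ?thesis .
qed

lemma sum_over_subsets:
  fixes f :: "nat \<Rightarrow> real"
  assumes "finite T" "c \<ge> 1"
  shows "(\<Sum>Y\<in>{Y. Y \<subseteq> T \<and> card Y = c}. \<Sum>y\<in>Y. f y)
         = (\<Sum>y\<in>T. f y * real ((card T - 1) choose (c - 1)))"
proof -
  let ?F = "{Y. Y \<subseteq> T \<and> card Y = c}"
  have fin: "finite ?F" using assms by simp
  have "(\<Sum>Y\<in>?F. \<Sum>y\<in>Y. f y) = (\<Sum>Y\<in>?F. \<Sum>y\<in>T. if y \<in> Y then f y else 0)"
  proof (rule sum.cong)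
    fix Y assume "Y \<in> ?F"
    then have "Y \<subseteq> T" by auto
    then show "(\<Sum>y\<in>Y. f y) = (\<Sum>y\<in>T. if y \<in> Y then f y else 0)"
      using assms(1) by (simp add: sum.If_cases Int_absorb1)
  qed simp
  also have "\<dots> = (\<Sum>y\<in>T. \<Sum>Y\<in>?F. if y \<in> Y then f y else 0)" by (rule sum.swap)
  also have "\<dots> = (\<Sum>y\<in>T. f y * real ((card T - 1) choose (c - 1)))"
  proof (rule sum.cong)
    fix y assume y: "y \<in> T"
    have "(\<Sum>Y\<in>?F. if y \<in> Y then f y else 0) = f y * real (card {Y \<in> ?F. y \<in> Y})"
    proof -
      have h: "?F \<inter> {Y. y \<in> Y} = {Y \<in> ?F. y \<in> Y}" by auto
      show ?thesis using fin by (simp add: sum.If_cases h)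
    qed
    also have "{Y \<in> ?F. y \<in> Y} = {Y. Y \<subseteq> T \<and> card Y = c \<and> y \<in> Y}" by auto
    finally show "(\<Sum>Y\<in>?F. if y \<in> Y then f y else 0) = f y * real ((card T - 1) choose (c - 1))"
      using card_with_elem[OF assms(1) y assms(2)] by simp
  qed simp
  finally show ?thesis .
qed

lemma swap_compl:
  fixes G :: "nat set \<Rightarrow> real" and p :: "nat \<Rightarrow> real"
  assumes "finite S" "finite F" "\<And>Y. Y \<in> F \<Longrightarrow> Y \<subseteq> S"
  shows "(\<Sum>Y\<in>F. G Y * (\<Sum>y\<in>S - Y. p y)) = (\<Sum>y\<in>S. p y * (\<Sum>Y\<in>{Y\<in>F. y \<notin> Y}. G Y))"
proof -
  have "(\<Sum>Y\<in>F. G Y * (\<Sum>y\<in>S - Y. p y)) = (\<Sum>Y\<in>F. \<Sum>y\<in>S. if y \<notin> Y then G Y * p y else 0)"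
  proof (rule sum.cong)
    fix Y assume "Y \<in> F"
    have "(\<Sum>y\<in>S - Y. p y) = (\<Sum>y\<in>S. if y \<notin> Y then p y else 0)"
      using assms(1) by (simp add: sum.If_cases Diff_eq Compl_eq)
    then show "G Y * (\<Sum>y\<in>S - Y. p y) = (\<Sum>y\<in>S. if y \<notin> Y then G Y * p y else 0)"
      by (simp add: sum_distrib_left if_distrib cong: if_cong)
  qed simp
  also have "\<dots> = (\<Sum>y\<in>S. \<Sum>Y\<in>F. if y \<notin> Y then G Y * p y else 0)" by (rule sum.swap)
  also have "\<dots> = (\<Sum>y\<in>S. p y * (\<Sum>Y\<in>{Y\<in>F. y \<notin> Y}. G Y))"
    using assms(2) by (simp add: sum.If_cases sum_distrib_left sum_distrib_right mult.commute Int_def)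
  finally show ?thesis .
qed

lemma pointwise:
  fixes l p :: "nat \<Rightarrow> real"
  assumes K2: "K \<ge> 2" and c: "c \<in> {1..K-1}"
  shows "(\<Sum>Y\<in>compl_sets K c.
        ((\<Sum>y\<in>labels K. l y) - (real (K - 1) / real c) * (\<Sum>y\<in>Y. l y)) *
          ((1 / real (K - 1 choose c)) * (\<Sum>y\<in>labels K - Y. p y)))
       = (\<Sum>y\<in>labels K. l y * p y)"
proof -
  let ?S = "labels K" let ?L = "\<Sum>y\<in>labels K. l y" let ?N = "real (K - 1 choose c)"
  let ?r = "real (K - 1) / real c"
  have finS: "finite ?S" and cardS: "card ?S = K" by (auto simp: labels_def)
  have c1: "c \<ge> 1" "c \<le> K - 1" using c by auto
  have Npos: "?N > 0" using c1 by simp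
  have key: "?r * real ((K - 2) choose (c - 1)) = ?N"
  proof -
    have "Suc (c - 1) * ((K - 1) choose Suc (c - 1)) = (K - 1) * ((K - 1 - 1) choose (c - 1))"
      by (rule binomial_absorption)
    then have "real c * ?N = real (K - 1) * real ((K - 2) choose (c - 1))"
      using c1 by (metis Suc_diff_1 diff_diff_left le_less_trans less_one not_le of_nat_mult one_add_one)
    then show ?thesis using c1 by (simp add: field_simps)
  qed
  have finF: "finite (compl_sets K c)" using finS by (simp add: compl_sets_def)
  have "(\<Sum>Y\<in>compl_sets K c. (?L - ?r * (\<Sum>y\<in>Y. l y)) * ((1 / ?N) * (\<Sum>y\<in>?S - Y. p y)))
     = (1 / ?N) * (\<Sum>Y\<in>compl_sets K c. (?L - ?r * (\<Sum>y\<in>Y. l y)) * (\<Sum>y\<in>?S - Y. p y))"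
    by (simp add: sum_distrib_left mult.left_commute)
  also have "(\<Sum>Y\<in>compl_sets K c. (?L - ?r * (\<Sum>y\<in>Y. l y)) * (\<Sum>y\<in>?S - Y. p y))
     = (\<Sum>y\<in>?S. p y * (\<Sum>Y\<in>{Y\<in>compl_sets K c. y \<notin> Y}. ?L - ?r * (\<Sum>y\<in>Y. l y)))"
    by (rule swap_compl[OF finS finF]) (auto simp: compl_sets_def)
  also have "\<dots> = (\<Sum>y\<in>?S. p y * (?N * l y))"
  proof (rule sum.cong)
    fix y assume y: "y \<in> ?S"
    let ?T = "?S - {y}"
    have finT: "finite ?T" and cardT: "card ?T = K - 1" using finS cardS y by auto
    have eq: "{Y\<in>compl_sets K c. y \<notin> Y} = {Y. Y \<subseteq> ?T \<and> card Y = c}"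
      by (auto simp: compl_sets_def)
    have "(\<Sum>Y\<in>{Y. Y \<subseteq> ?T \<and> card Y = c}. ?L - ?r * (\<Sum>y\<in>Y. l y))
        = real (card {Y. Y \<subseteq> ?T \<and> card Y = c}) * ?L
          - ?r * (\<Sum>Y\<in>{Y. Y \<subseteq> ?T \<and> card Y = c}. \<Sum>y\<in>Y. l y)"
      by (simp add: sum_subtractf sum_distrib_left)
    also have "\<dots> = ?N * ?L - ?r * (\<Sum>z\<in>?T. l z * real ((K - 1 - 1) choose (c - 1)))"
      using sum_over_subsets[OF finT c1(1), of l] finT cardT by (simp add: n_subsets)
    also have "(\<Sum>z\<in>?T. l z * real ((K - 1 - 1) choose (c - 1))) = (?L - l y) * real ((K - 2) choose (c - 1))"
      using finS y by (simp add: sum_distrib_right[symmetric] sum_diff1 numeral_2_eq_2)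
    also have "?N * ?L - ?r * ((?L - l y) * real ((K - 2) choose (c - 1))) = ?N * l y"
      using key by (simp add: algebra_simps)
    finally show "p y * (\<Sum>Y\<in>{Y\<in>compl_sets K c. y \<notin> Y}. ?L - ?r * (\<Sum>y\<in>Y. l y)) = p y * (?N * l y)"
      using eq by simp
  qed simp
  finally show ?thesis using Npos
    by (simp add: sum_distrib_left field_simps)
qed

theorem theorem1:
  fixes K :: nat and X :: "'a::euclidean_space set"
    and p :: "'a \<Rightarrow> nat \<Rightarrow> real"
    and pbar :: "nat \<Rightarrow> 'a \<Rightarrow> nat set \<Rightarrow> real"
    and \<alpha> :: "nat \<Rightarrow> real"
    and loss :: "(nat \<Rightarrow> real) \<Rightarrow> nat \<Rightarrow> real"
    and g :: "'a \<Rightarrow> (nat \<Rightarrow> real)"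
  assumes K2: "K \<ge> 2"
    and X_meas: "X \<in> sets lborel"
    and p_nonneg: "\<And>x y. x \<in> X \<Longrightarrow> y \<in> labels K \<Longrightarrow> p x y \<ge> 0"
    and p_int: "\<And>y. y \<in> labels K \<Longrightarrow> set_integrable lborel X (\<lambda>x. p x y)"
    and p_total: "(\<Sum>y\<in>labels K. LINT x:X|lborel. p x y) = 1"
    and pbar_def: "\<And>c x Y. c \<in> {1..K-1} \<Longrightarrow> x \<in> X \<Longrightarrow> Y \<in> compl_sets K c \<Longrightarrow>
        pbar c x Y = (1 / real (K - 1 choose c)) * (\<Sum>y\<in>labels K - Y. p x y)"
    and \<alpha>_nonneg: "\<And>c. c \<in> {1..K-1} \<Longrightarrow> \<alpha> c \<ge> 0"
    and \<alpha>_sum: "(\<Sum>c\<in>{1..K-1}. \<alpha> c) = 1"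
    and lossnn: "\<And>v y. loss v y \<ge> 0"
    and R_finite: "set_integrable lborel X (\<lambda>x. \<Sum>y\<in>labels K. loss (g x) y * p x y)"
    and Rc_finite: "\<And>c. c \<in> {1..K-1} \<Longrightarrow> set_integrable lborel X (Rc_integrand K c (pbar c) loss g)"
  shows "mcl_risk K X \<alpha> pbar loss g = class_risk K X p loss g"
proof -
  have eq: "comp_risk_c K c X (pbar c) loss g = class_risk K X p loss g" if c: "c \<in> {1..K-1}" for c
    unfolding comp_risk_c_def class_risk_def
  proof (rule set_lebesgue_integral_cong[OF X_meas])
    show "\<forall>x. x \<in> X \<longrightarrow> Rc_integrand K c (pbar c) loss g x = (\<Sum>y\<in>labels K. loss (g x) y * p x y)"
    proof (intro allI impI)
      fix x assume x: "x \<in> X"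
      have "Rc_integrand K c (pbar c) loss g x = (\<Sum>Y\<in>compl_sets K c.
        ((\<Sum>y\<in>labels K. loss (g x) y) - (real (K - 1) / real c) * (\<Sum>y\<in>Y. loss (g x) y)) *
          ((1 / real (K - 1 choose c)) * (\<Sum>y\<in>labels K - Y. p x y)))"
        unfolding Rc_integrand_def cum_loss_def
        by (rule sum.cong) (auto simp: pbar_def[OF c x])
      also have "\<dots> = (\<Sum>y\<in>labels K. loss (g x) y * p x y)"
        by (rule pointwise[OF K2 c])
      finally show "Rc_integrand K c (pbar c) loss g x = (\<Sum>y\<in>labels K. loss (g x) y * p x y)" .
    qed
  qed
  have "mcl_risk K X \<alpha> pbar loss g = (\<Sum>c\<in>{1..K-1}. \<alpha> c * class_risk K X p loss g)"
    unfolding mcl_risk_def by (rule sum.cong) (auto simp: eq)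
  also have "\<dots> = class_risk K X p loss g" using \<alpha>_sum by (simp add: sum_distrib_right[symmetric])
  finally show ?thesis .
qed

end
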